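(* Let $A$ be a non-zero $n\times m$ matrix with entries in $[0,1]$. Suppose the row player plays the multiplicative weight update (MWU) algorithm with a non-increasing step size sequence $(\mu_t)$ such that $\lim_{T\to\infty}\sum_{t=1}^T\mu_t=\infty$ and there exists $t'\in\mathbb{N}$ with $\mu_{t'}\le1$, and the column player plays the LRCA algorithm. Then there exists a minimax strategy $\bar x^*$ of the row player such that $\lim_{t\to\infty}RE(\bar x^*\|x_t)=0$, and hence $\lim_{t\to\infty}x_t=\bar x^*$.
   Context: Repeated two-player zero-sum game: at round $t=1,2,\dots$ the row player plays $x_t\in\Delta_n$, the column player plays $y_t\in\Delta_m$; the row player minimizes, the column player maximizes $x_t^\top Ay_t$. $v$ is the value of the game and $f(x):=\max_{y\in\Delta_m}x^\top Ay$; a minimax strategy of the row player is $x$ with $f(x)=v$, of the column player is $y$ with $\min_{x\in\Delta_n}x^\top Ay=v$. Relative entropy: $RE(X_1\|X_2)=\sum_{i}X_1(i)\log\frac{X_1(i)}{X_2(i)}$. MWU for the row player: from an initial $x_1$ with all entries positive, $x_{t+1}(i)=x_t(i)e^{-\mu_t e_i^\top Ay_t}/\sum_j x_t(j)e^{-\mu_t e_j^\top Ay_t}$, $\mu_t\ge0$. LRCA for the column player (who knows $A$ and fixes a minimax strategy $y^*$ of the column player): at odd rounds $y_t=y^*$; at even rounds $t$, $e_t\in\arg\max_{e\in\{e_1,\dots,e_m\}}x_{t-1}^\top Ae$, $\alpha_t=\frac{f(x_{t-1})-v}{\max(n/4,2)}$, $y_t=(1-\alpha_t)y^*+\alpha_te_t$.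 *)

theory Defs
  imports "HOL-Analysis.Analysis"
begin

(* Vectors of length k are functions nat => real, only indices < k matter.
   An n x m matrix is A :: nat => nat => real with A i j for i < n, j < m. *)

definition prob_simplex :: "nat \<Rightarrow> (nat \<Rightarrow> real) set" where
  "prob_simplex k = {x. (\<forall>i<k. 0 \<le> x i) \<and> (\<Sum>i<k. x i) = 1}"

definition payoff :: "nat \<Rightarrow> nat \<Rightarrow> (nat \<Rightarrow> nat \<Rightarrow> real) \<Rightarrow> (nat \<Rightarrow> real) \<Rightarrow> (nat \<Rightarrow> real) \<Rightarrow> real" where
  "payoff n m A x y = (\<Sum>i<n. \<Sum>j<m. x i * A i j * y j)"

definition fmax :: "nat \<Rightarrow> nat \<Rightarrow> (nat \<Rightarrow> nat \<Rightarrow> real) \<Rightarrow> (nat \<Rightarrow> real) \<Rightarrow> real" where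
  "fmax n m A x = (SUP y\<in>prob_simplex m. payoff n m A x y)"

definition game_value :: "nat \<Rightarrow> nat \<Rightarrow> (nat \<Rightarrow> nat \<Rightarrow> real) \<Rightarrow> real" where
  "game_value n m A = (INF x\<in>prob_simplex n. fmax n m A x)"

definition row_minimax :: "nat \<Rightarrow> nat \<Rightarrow> (nat \<Rightarrow> nat \<Rightarrow> real) \<Rightarrow> (nat \<Rightarrow> real) \<Rightarrow> bool" where
  "row_minimax n m A x \<longleftrightarrow> x \<in> prob_simplex n \<and> fmax n m A x = game_value n m A"

definition col_minimax :: "nat \<Rightarrow> nat \<Rightarrow> (nat \<Rightarrow> nat \<Rightarrow> real) \<Rightarrow> (nat \<Rightarrow> real) \<Rightarrow> bool" where
  "col_minimax n m A y \<longleftrightarrow> y \<in> prob_simplex m \<and>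
     (INF x\<in>prob_simplex n. payoff n m A x y) = game_value n m A"

definition unitv :: "nat \<Rightarrow> nat \<Rightarrow> real" where
  "unitv j = (\<lambda>k. if k = j then 1 else 0)"

definition rel_entropy :: "nat \<Rightarrow> (nat \<Rightarrow> real) \<Rightarrow> (nat \<Rightarrow> real) \<Rightarrow> real" where
  "rel_entropy n X1 X2 = (\<Sum>i<n. if X1 i = 0 then 0 else X1 i * ln (X1 i / X2 i))"

end

theory Submission
  imports Defs
begin


lemma exp_quad_bound:
  fixes s :: real assumes "\<bar>s\<bar> \<le> 1" shows "exp s \<le> 1 + s + s^2"
proof (cases "s \<ge> 0")
  case True then show ?thesis using exp_bound[of s] assms by auto
next
  case False
  define z where "z = -s"
  have z0: "z \<ge> 0" using False z_def by auto
  have p: "1 - z + z^2 > 0"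
  proof -
    have "1 - z + z^2 = (z - 1/2)^2 + 3/4" by (simp add: power2_eq_square algebra_simps)
    moreover have "(z - 1/2)^2 \<ge> 0" by simp
    ultimately show ?thesis by linarith
  qed
  have "1 + z \<le> exp z" using exp_ge_add_one_self by blast
  hence "(1+z)*(1 - z + z^2) \<le> exp z * (1 - z + z^2)" using p by (intro mult_right_mono) auto
  moreover have "(1+z)*(1 - z + z^2) = 1 + z^3" by (simp add: algebra_simps power2_eq_square power3_eq_cube)
  moreover have "z^3 \<ge> 0" using z0 by simp
  ultimately have "1 \<le> exp z * (1 - z + z^2)" by linarith
  hence "1 / exp z \<le> 1 - z + z^2" by (simp add: field_simps)
  thus ?thesis by (simp add: z_def exp_minus field_simps)
qed

lemma ln_ge_sq: fixes a b :: real assumes "a > 0" "b > 0"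
  shows "a * ln (a / b) \<ge> 2*a - 2 * sqrt a * sqrt b"
proof -
  have "ln (sqrt b / sqrt a) \<le> sqrt b / sqrt a - 1" using assms by (intro ln_le_minus_one) auto
  moreover have "ln (sqrt b / sqrt a) = - ln (a/b) / 2"
    using assms by (simp add: ln_div ln_sqrt)
  ultimately have "ln (a/b) \<ge> 2 - 2 * sqrt b / sqrt a" by linarith
  hence "a * ln (a/b) \<ge> a * (2 - 2 * sqrt b / sqrt a)" using assms by (intro mult_left_mono) auto
  moreover have "a * (2 - 2 * sqrt b / sqrt a) = 2*a - 2 * sqrt a * sqrt b"
  proof -
    have "a = sqrt a * sqrt a" using assms by simp
    hence "a * (2 * sqrt b / sqrt a) = 2 * sqrt a * sqrt b" using assms
      by (simp add: field_simps)
    thus ?thesis by (simp add: right_diff_distrib)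
  qed
  ultimately show ?thesis by simp
qed


definition colv :: "nat \<Rightarrow> (nat \<Rightarrow> nat \<Rightarrow> real) \<Rightarrow> (nat \<Rightarrow> real) \<Rightarrow> nat \<Rightarrow> real" where
  "colv n A z j = (\<Sum>i<n. z i * A i j)"
definition rowv :: "nat \<Rightarrow> (nat \<Rightarrow> nat \<Rightarrow> real) \<Rightarrow> (nat \<Rightarrow> real) \<Rightarrow> nat \<Rightarrow> real" where
  "rowv m A w i = (\<Sum>j<m. A i j * w j)"

lemma payoff_rowv: "payoff n m A z w = (\<Sum>i<n. z i * rowv m A w i)"
  by (simp add: payoff_def rowv_def sum_distrib_left mult.assoc)

lemma payoff_colv: "payoff n m A z w = (\<Sum>j<m. w j * colv n A z j)"
  unfolding payoff_def colv_def
  by (subst sum.swap) (simp add: sum_distrib_left algebra_simps)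

lemma sum_unit: fixes f :: "nat \<Rightarrow> real" assumes "j < m"
  shows "(\<Sum>k<m. (if k = j then 1 else 0) * f k) = f j"
proof -
  have "(\<Sum>k<m. (if k = j then 1 else 0) * f k) = (\<Sum>k<m. if k = j then f k else 0)"
    by (rule sum.cong) auto
  also have "\<dots> = f j" using assms by (simp add: sum.delta)
  finally show ?thesis .
qed

lemma sum_unit': fixes f :: "nat \<Rightarrow> real" assumes "j < m"
  shows "(\<Sum>k<m. f k * (if k = j then 1 else 0)) = f j"
  using sum_unit[OF assms, of f] by (simp add: mult.commute)

lemma payoff_unit_right: "j < m \<Longrightarrow> payoff n m A z (unitv j) = colv n A z j"
  unfolding payoff_colv unitv_def by (rule sum_unit)

lemma payoff_unit_left: "i < n \<Longrightarrow> payoff n m A (unitv i) w = rowv m A w i"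
  unfolding payoff_rowv unitv_def by (rule sum_unit)

lemma unitv_simplex: "i < k \<Longrightarrow> unitv i \<in> prob_simplex k"
  unfolding prob_simplex_def unitv_def by (simp add: if_distrib cong: if_cong)

lemma fmax_Max:
  assumes "m \<ge> 1"
  shows "fmax n m A z = Max (colv n A z ` {..<m})"
proof -
  let ?M = "Max (colv n A z ` {..<m})"
  have fin: "finite (colv n A z ` {..<m})" and ne: "colv n A z ` {..<m} \<noteq> {}" using assms by (auto simp: lessThan_empty_iff)
  obtain j where j: "j < m" "colv n A z j = ?M" using Max_in[OF fin ne] by auto
  have le: "colv n A z k \<le> ?M" if "k < m" for k using fin that by auto
  show ?thesis unfolding fmax_def
  proof (rule cSup_eq_maximum)
    show "?M \<in> payoff n m A z ` prob_simplex m"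
      using j unitv_simplex[OF j(1)] payoff_unit_right[OF j(1)] by (metis image_eqI)
  next
    fix s assume "s \<in> payoff n m A z ` prob_simplex m"
    then obtain w where w: "w \<in> prob_simplex m" "s = payoff n m A z w" by auto
    have "s = (\<Sum>j<m. w j * colv n A z j)" using w payoff_colv by simp
    also have "\<dots> \<le> (\<Sum>j<m. w j * ?M)"
      using w(1) le by (intro sum_mono mult_left_mono) (auto simp: prob_simplex_def)
    also have "\<dots> = ?M" using w(1) by (simp add: prob_simplex_def sum_distrib_right[symmetric])
    finally show "s \<le> ?M" .
  qed
qed

lemma fmax_ge_colv: "m \<ge> 1 \<Longrightarrow> j < m \<Longrightarrow> colv n A z j \<le> fmax n m A z"
  by (simp add: fmax_Max)

lemma fmax_attained: assumes "m \<ge> 1" shows "\<exists>j<m. fmax n m A z = colv n A z j"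
proof -
  have fin: "finite (colv n A z ` {..<m})" and ne: "colv n A z ` {..<m} \<noteq> {}" using assms by (auto simp: lessThan_empty_iff)
  show ?thesis using Max_in[OF fin ne] fmax_Max[OF assms] by auto
qed

lemma payoff_le_fmax: assumes "m \<ge> 1" "w \<in> prob_simplex m" shows "payoff n m A z w \<le> fmax n m A z"
proof -
  have "payoff n m A z w = (\<Sum>j<m. w j * colv n A z j)" by (simp add: payoff_colv)
  also have "\<dots> \<le> (\<Sum>j<m. w j * fmax n m A z)"
    using assms fmax_ge_colv by (intro sum_mono mult_left_mono) (auto simp: prob_simplex_def)
  also have "\<dots> = fmax n m A z" using assms(2) by (simp add: prob_simplex_def sum_distrib_right[symmetric])
  finally show ?thesis .
qed

lemma colv_bounds:
  assumes "z \<in> prob_simplex n" "\<forall>i<n. \<forall>j<m. 0 \<le> A i j \<and> A i j \<le> 1" "j < m"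
  shows "0 \<le> colv n A z j" "colv n A z j \<le> 1"
proof -
  show "0 \<le> colv n A z j" using assms unfolding colv_def prob_simplex_def by (intro sum_nonneg) auto
  have "colv n A z j \<le> (\<Sum>i<n. z i)" using assms unfolding colv_def prob_simplex_def
    by (intro sum_mono) (simp add: mult_left_le)
  thus "colv n A z j \<le> 1" using assms(1) by (simp add: prob_simplex_def)
qed

lemma rowv_bounds:
  assumes "w \<in> prob_simplex m" "\<forall>i<n. \<forall>j<m. 0 \<le> A i j \<and> A i j \<le> 1" "i < n"
  shows "0 \<le> rowv m A w i" "rowv m A w i \<le> 1"
proof -
  show "0 \<le> rowv m A w i" using assms unfolding rowv_def prob_simplex_def by (intro sum_nonneg) auto
  have "rowv m A w i \<le> (\<Sum>j<m. w j)" using assms unfolding rowv_def prob_simplex_def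
    by (intro sum_mono) (simp add: mult_left_le_one_le)
  thus "rowv m A w i \<le> 1" using assms(1) by (simp add: prob_simplex_def)
qed

lemma payoff_nonneg:
  assumes "z \<in> prob_simplex n" "w \<in> prob_simplex m" "\<forall>i<n. \<forall>j<m. 0 \<le> A i j \<and> A i j \<le> 1"
  shows "0 \<le> payoff n m A z w"
  unfolding payoff_rowv using assms rowv_bounds[OF assms(2,3)]
  by (intro sum_nonneg mult_nonneg_nonneg) (auto simp: prob_simplex_def)

lemma fmax_bounds:
  assumes "m \<ge> 1" "z \<in> prob_simplex n" "\<forall>i<n. \<forall>j<m. 0 \<le> A i j \<and> A i j \<le> 1"
  shows "0 \<le> fmax n m A z" "fmax n m A z \<le> 1"
proof -
  obtain j where "j < m" "fmax n m A z = colv n A z j" using fmax_attained[OF assms(1)] by blast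
  thus "0 \<le> fmax n m A z" "fmax n m A z \<le> 1" using colv_bounds[OF assms(2,3)] by auto
qed



lemma re_hellinger:
  assumes xs: "xs \<in> prob_simplex n" and q: "q \<in> prob_simplex n" and qpos: "\<forall>i<n. 0 < q i"
  shows "(\<Sum>i<n. (sqrt (xs i) - sqrt (q i))^2) \<le> rel_entropy n xs q"
proof -
  have h: "2 * xs i - 2 * sqrt (xs i) * sqrt (q i) \<le> (if xs i = 0 then 0 else xs i * ln (xs i / q i))"
    if "i < n" for i
  proof (cases "xs i = 0")
    case True thus ?thesis by simp
  next
    case False
    hence "xs i > 0" using xs that by (auto simp: prob_simplex_def less_le)
    thus ?thesis using ln_ge_sq[of "xs i" "q i"] qpos that False by simp
  qed
  have sq: "(sqrt (xs i) - sqrt (q i))^2 = xs i + q i - 2 * sqrt (xs i) * sqrt (q i)" if "i < n" for i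
    using xs q qpos that by (simp add: power2_diff prob_simplex_def less_imp_le)
  have "(\<Sum>i<n. (sqrt (xs i) - sqrt (q i))^2) = (\<Sum>i<n. xs i + q i - 2 * sqrt (xs i) * sqrt (q i))"
    by (intro sum.cong) (auto simp: sq)
  also have "\<dots> = (\<Sum>i<n. xs i) + (\<Sum>i<n. q i) - (\<Sum>i<n. 2 * sqrt (xs i) * sqrt (q i))"
    by (simp add: sum.distrib sum_subtractf)
  also have "\<dots> = (\<Sum>i<n. xs i) + (\<Sum>i<n. xs i) - (\<Sum>i<n. 2 * sqrt (xs i) * sqrt (q i))"
    using xs q by (simp add: prob_simplex_def)
  also have "\<dots> = (\<Sum>i<n. 2 * xs i - 2 * sqrt (xs i) * sqrt (q i))"
    by (simp add: sum_subtractf sum_distrib_left[symmetric])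
  also have "\<dots> \<le> rel_entropy n xs q" unfolding rel_entropy_def by (rule sum_mono) (simp add: h)
  finally show ?thesis .
qed

lemma re_nonneg:
  assumes "xs \<in> prob_simplex n" "q \<in> prob_simplex n" "\<forall>i<n. 0 < q i"
  shows "0 \<le> rel_entropy n xs q"
  using re_hellinger[OF assms] sum_nonneg[of "{..<n}" "\<lambda>i. (sqrt (xs i) - sqrt (q i))^2"] by auto

lemma re_component:
  assumes "xs \<in> prob_simplex n" "q \<in> prob_simplex n" "\<forall>i<n. 0 < q i" "i < n"
  shows "(sqrt (xs i) - sqrt (q i))^2 \<le> rel_entropy n xs q"
proof -
  have "(sqrt (xs i) - sqrt (q i))^2 \<le> (\<Sum>i<n. (sqrt (xs i) - sqrt (q i))^2)"
    using assms(4) by (intro member_le_sum) auto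
  thus ?thesis using re_hellinger[OF assms(1-3)] by linarith
qed

lemma re_continuous:
  assumes xs: "xs \<in> prob_simplex n" and conv: "\<forall>i<n. (\<lambda>k. z k i) \<longlonglongrightarrow> xs i"
  shows "(\<lambda>k. rel_entropy n xs (z k)) \<longlonglongrightarrow> 0"
proof -
  have "(\<lambda>k. rel_entropy n xs (z k)) \<longlonglongrightarrow>
        (\<Sum>i<n. if xs i = 0 then 0 else xs i * ln (xs i / xs i))"
    unfolding rel_entropy_def
  proof (rule tendsto_sum)
    fix i assume "i \<in> {..<n}"
    hence i: "i < n" by simp
    show "(\<lambda>k. if xs i = 0 then 0 else xs i * ln (xs i / z k i)) \<longlonglongrightarrow>
          (if xs i = 0 then 0 else xs i * ln (xs i / xs i))"
    proof (cases "xs i = 0")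
      case True thus ?thesis by simp
    next
      case False
      have pos: "xs i > 0" using xs i False by (auto simp: prob_simplex_def less_le)
      have "(\<lambda>k. xs i / z k i) \<longlonglongrightarrow> xs i / xs i"
        using conv i False by (intro tendsto_divide tendsto_const) auto
      hence "(\<lambda>k. ln (xs i / z k i)) \<longlonglongrightarrow> ln (xs i / xs i)"
        using pos by (intro tendsto_ln) auto
      hence "(\<lambda>k. xs i * ln (xs i / z k i)) \<longlonglongrightarrow> xs i * ln (xs i / xs i)"
        by (intro tendsto_mult_left)
      thus ?thesis using False by simp
    qed
  qed
  moreover have "(\<Sum>i<n. if xs i = 0 then 0 else xs i * ln (xs i / xs i)) = 0"
    by (intro sum.neutral) auto
  ultimately show ?thesis by simp
qed

lemma diag_subseq:
  fixes z :: "nat \<Rightarrow> nat \<Rightarrow> real"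
  shows "(\<forall>k. \<forall>i<K. 0 \<le> z k i \<and> z k i \<le> 1) \<Longrightarrow>
     \<exists>r L. strict_mono r \<and> (\<forall>i<K. (\<lambda>k. z (r k) i) \<longlonglongrightarrow> L i)"
proof (induction K)
  case 0
  show ?case by (rule exI[of _ id]) (auto simp: strict_mono_def)
next
  case (Suc K)
  then obtain r L where r: "strict_mono r" "\<forall>i<K. (\<lambda>k. z (r k) i) \<longlonglongrightarrow> L i" by auto
  have "bounded (range (\<lambda>k. z (r k) K))"
    unfolding bounded_real using Suc.prems by (intro exI[of _ 1]) auto
  then obtain l r2 where r2: "strict_mono r2" "((\<lambda>k. z (r k) K) \<circ> r2) \<longlonglongrightarrow> l"
    using bounded_imp_convergent_subsequence by blast
  show ?case
  proof (intro exI conjI allI impI)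
    show "strict_mono (r \<circ> r2)" using r(1) r2(1) by (rule strict_mono_o)
    fix i assume "i < Suc K"
    show "(\<lambda>k. z ((r \<circ> r2) k) i) \<longlonglongrightarrow> (L(K := l)) i"
    proof (cases "i = K")
      case True thus ?thesis using r2(2) by (simp add: o_def)
    next
      case False
      hence "i < K" using \<open>i < Suc K\<close> by simp
      hence "((\<lambda>k. z (r k) i) \<circ> r2) \<longlonglongrightarrow> L i" using r(2) r2(1) by (intro LIMSEQ_subseq_LIMSEQ) auto
      thus ?thesis using False by (simp add: o_def)
    qed
  qed
qed



locale thm5 =
  fixes n m :: nat
    and A :: "nat \<Rightarrow> nat \<Rightarrow> real"
    and mu :: "nat \<Rightarrow> real"
    and x y :: "nat \<Rightarrow> nat \<Rightarrow> real"
    and ystar :: "nat \<Rightarrow> real"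
    and e :: "nat \<Rightarrow> nat"
    and alpha :: "nat \<Rightarrow> real"
  assumes n_pos: "n \<ge> 1" and m_pos: "m \<ge> 1"
    and A_range: "\<forall>i<n. \<forall>j<m. 0 \<le> A i j \<and> A i j \<le> 1"
    and mu_nonneg: "\<forall>t\<ge>1. 0 \<le> mu t"
    and mu_noninc: "\<forall>t\<ge>1. mu (Suc t) \<le> mu t"
    and mu_div: "filterlim (\<lambda>T. \<Sum>t=1..T. mu t) at_top sequentially"
    and mu_small: "\<exists>t'\<ge>1. mu t' \<le> 1"
    and x1: "x 1 \<in> prob_simplex n" and x1_pos: "\<forall>i<n. 0 < x 1 i"
    and mwu: "\<forall>t\<ge>1. \<forall>i<n. x (Suc t) i =
        x t i * exp (- mu t * (\<Sum>j<m. A i j * y t j)) /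
        (\<Sum>k<n. x t k * exp (- mu t * (\<Sum>j<m. A k j * y t j)))"
    and ystar: "col_minimax n m A ystar"
    and odd_rounds: "\<forall>t\<ge>1. odd t \<longrightarrow> y t = ystar"
    and e_choice: "\<forall>t\<ge>1. even t \<longrightarrow> e t < m \<and>
        (\<forall>j<m. payoff n m A (x (t - 1)) (unitv j) \<le> payoff n m A (x (t - 1)) (unitv (e t)))"
    and alpha_def: "\<forall>t\<ge>1. even t \<longrightarrow>
        alpha t = (fmax n m A (x (t - 1)) - game_value n m A) / max (real n / 4) 2"
    and even_rounds: "\<forall>t\<ge>1. even t \<longrightarrow>
        y t = (\<lambda>j. (1 - alpha t) * ystar j + alpha t * unitv (e t) j)"
begin

abbreviation "v \<equiv> game_value n m A"
abbreviation "S \<equiv> prob_simplex n"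
abbreviation "cc \<equiv> max (real n / 4) 2"
abbreviation "a \<equiv> rowv m A ystar"
definition "Z t = (\<Sum>k<n. x t k * exp (- mu t * rowv m A (y t) k))"
definition "W t = (\<Sum>k<n. x t k * exp (- mu t * (a k - v)))"
abbreviation "Phi xs t \<equiv> rel_entropy n xs (x t)"

lemma mwu': "t \<ge> 1 \<Longrightarrow> i < n \<Longrightarrow> x (Suc t) i = x t i * exp (- mu t * rowv m A (y t) i) / Z t"
  using mwu by (simp add: rowv_def Z_def)

lemma ystar_simplex: "ystar \<in> prob_simplex m" using ystar by (simp add: col_minimax_def)

lemma S_ne: "S \<noteq> {}" using unitv_simplex[of 0 n] n_pos by auto

lemma v_le_fmax: "z \<in> S \<Longrightarrow> v \<le> fmax n m A z"
  unfolding game_value_def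
  by (rule cINF_lower[OF bdd_belowI2[of _ 0]]) (auto intro: fmax_bounds[OF m_pos _ A_range])

lemma v_nonneg: "0 \<le> v"
  unfolding game_value_def using S_ne by (rule cINF_greatest) (auto intro: fmax_bounds[OF m_pos _ A_range])

lemma v_le1: "v \<le> 1"
  using v_le_fmax[OF unitv_simplex[of 0 n]] fmax_bounds(2)[OF m_pos unitv_simplex[of 0 n] A_range] n_pos by auto

lemma ystar_ge: "z \<in> S \<Longrightarrow> v \<le> payoff n m A z ystar"
proof -
  assume z: "z \<in> S"
  have "(INF x\<in>S. payoff n m A x ystar) = v" using ystar by (simp add: col_minimax_def)
  moreover have "(INF x\<in>S. payoff n m A x ystar) \<le> payoff n m A z ystar"
    by (rule cINF_lower[OF bdd_belowI2[of _ 0]]) (auto intro: payoff_nonneg[OF _ ystar_simplex A_range] z)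
  ultimately show ?thesis by simp
qed

lemma a_ge: "i < n \<Longrightarrow> v \<le> a i"
  using ystar_ge[OF unitv_simplex[of i n]] payoff_unit_left[of i n m A ystar] by simp

lemma minimax_ystar: "row_minimax n m A xs \<Longrightarrow> payoff n m A xs ystar = v"
  using ystar_ge[of xs] payoff_le_fmax[OF m_pos ystar_simplex, of n A xs]
  by (auto simp: row_minimax_def)

lemma minimax_le: "row_minimax n m A xs \<Longrightarrow> w \<in> prob_simplex m \<Longrightarrow> payoff n m A xs w \<le> v"
  using payoff_le_fmax[OF m_pos, of w n A xs] by (auto simp: row_minimax_def)

lemma x_props: "t \<ge> 1 \<Longrightarrow> x t \<in> S \<and> (\<forall>i<n. 0 < x t i)"
proof (induction t rule: dec_induct)
  case base thus ?case using x1 x1_pos by simp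
next
  case (step t)
  have pos: "0 < x t k * exp (- mu t * rowv m A (y t) k)" if "k < n" for k using step.IH that by simp
  have Zpos: "Z t > 0" unfolding Z_def using pos n_pos
    by (intro sum_pos) (auto simp: lessThan_empty_iff)
  have "(\<Sum>i<n. x (Suc t) i) = (\<Sum>i<n. x t i * exp (- mu t * rowv m A (y t) i)) / Z t"
    using mwu'[OF step.hyps(1)] by (simp add: sum_divide_distrib)
  also have "\<dots> = 1" using Zpos by (simp add: Z_def)
  finally show ?case using mwu'[OF step.hyps(1)] Zpos pos
    by (auto simp: prob_simplex_def less_imp_le)
qed

lemma Z_pos: "t \<ge> 1 \<Longrightarrow> Z t > 0"
  unfolding Z_def using x_props[of t] n_pos by (intro sum_pos) (auto simp: lessThan_empty_iff)

lemma Phi_nonneg: "xs \<in> S \<Longrightarrow> t \<ge> 1 \<Longrightarrow> 0 \<le> Phi xs t"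
  using x_props re_nonneg by blast

lemma step_identity:
  assumes t: "t \<ge> 1" and xs: "xs \<in> S"
  shows "Phi xs (Suc t) = Phi xs t + mu t * payoff n m A xs (y t) + ln (Z t)"
proof -
  have trm: "(if xs i = 0 then 0 else xs i * ln (xs i / x (Suc t) i)) =
     (if xs i = 0 then 0 else xs i * ln (xs i / x t i)) + xs i * (mu t * rowv m A (y t) i) + xs i * ln (Z t)"
    if i: "i < n" for i
  proof (cases "xs i = 0")
    case True thus ?thesis by simp
  next
    case False
    have xpos: "xs i > 0" using xs i False by (auto simp: prob_simplex_def less_le)
    have xt: "x t i > 0" using x_props[OF t] i by auto
    have Zp: "Z t > 0" using Z_pos[OF t] .
    have "xs i / x (Suc t) i = (xs i / x t i) * Z t * exp (mu t * rowv m A (y t) i)"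
    proof -
      have xs1: "x (Suc t) i > 0" using x_props[of "Suc t"] i by auto
      show ?thesis using mwu'[OF t i] xt Zp xs1 by (simp add: exp_minus field_simps)
    qed
    hence "ln (xs i / x (Suc t) i) = ln (xs i / x t i) + ln (Z t) + mu t * rowv m A (y t) i"
      using xpos xt Zp by (simp only: ln_mult ln_exp) simp
    thus ?thesis using False by (simp add: algebra_simps)
  qed
  have "Phi xs (Suc t) = (\<Sum>i<n. (if xs i = 0 then 0 else xs i * ln (xs i / x t i))
     + xs i * (mu t * rowv m A (y t) i) + xs i * ln (Z t))"
    unfolding rel_entropy_def by (intro sum.cong) (auto simp: trm)
  also have "\<dots> = Phi xs t + mu t * (\<Sum>i<n. xs i * rowv m A (y t) i) + (\<Sum>i<n. xs i) * ln (Z t)"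
    unfolding rel_entropy_def by (simp add: sum.distrib sum_distrib_left sum_distrib_right algebra_simps)
  also have "\<dots> = Phi xs t + mu t * payoff n m A xs (y t) + ln (Z t)"
    using xs by (simp add: payoff_rowv prob_simplex_def)
  finally show ?thesis .
qed

end

context thm5 begin

lemma W_props:
  assumes t: "t \<ge> 1"
  shows "0 < W t" "W t \<le> 1"
proof -
  have xp: "x t \<in> S" "\<forall>i<n. 0 < x t i" using x_props[OF t] by auto
  show "0 < W t" unfolding W_def using xp n_pos by (intro sum_pos) (auto simp: lessThan_empty_iff)
  have "W t \<le> (\<Sum>k<n. x t k)" unfolding W_def
  proof (rule sum_mono)
    fix k assume k: "k \<in> {..<n}"
    have "exp (- mu t * (a k - v)) \<le> 1" using a_ge[of k] k mu_nonneg t by (simp add: mult_nonneg_nonneg)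
    thus "x t k * exp (- mu t * (a k - v)) \<le> x t k" using xp k by (simp add: mult_left_le)
  qed
  thus "W t \<le> 1" using xp by (simp add: prob_simplex_def)
qed

lemma Z_W: assumes t: "t \<ge> 1" and od: "odd t" shows "Z t = exp (- mu t * v) * W t"
    unfolding Z_def W_def sum_distrib_left using odd_rounds t od
    by (intro sum.cong) (auto simp: exp_add[symmetric] algebra_simps)

lemma odd_step:
  assumes t: "t \<ge> 1" and od: "odd t" and xs: "row_minimax n m A xs"
  shows "Phi xs (Suc t) = Phi xs t + ln (W t)"
    and "\<And>k. k < n \<Longrightarrow> x (Suc t) k = x t k * exp (- mu t * (a k - v)) / W t"
proof -
  have yt: "y t = ystar" using odd_rounds t od by auto
  have xsS: "xs \<in> S" using xs by (simp add: row_minimax_def)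
  have "Phi xs (Suc t) = Phi xs t + mu t * v + ln (Z t)"
    using step_identity[OF t xsS] minimax_ystar[OF xs] yt by simp
  also have "ln (Z t) = - mu t * v + ln (W t)" using W_props[OF t] Z_W[OF t od] by (simp add: ln_mult)
  finally show "Phi xs (Suc t) = Phi xs t + ln (W t)" by simp
  fix k assume k: "k < n"
  have "x (Suc t) k = x t k * exp (- mu t * a k) / (exp (- mu t * v) * W t)"
    using mwu'[OF t k] Z_W[OF t od] yt by simp
  also have "exp (- mu t * a k) = exp (- mu t * v) * exp (- mu t * (a k - v))"
    by (simp add: exp_add[symmetric] algebra_simps)
  finally show "x (Suc t) k = x t k * exp (- mu t * (a k - v)) / W t" by simp
qed

lemma odd_decr: "t \<ge> 1 \<Longrightarrow> odd t \<Longrightarrow> row_minimax n m A xs \<Longrightarrow> Phi xs (Suc t) \<le> Phi xs t"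
  using odd_step(1)[of t xs] W_props[of t] by simp

end

context thm5 begin

lemma pair_step:
  assumes s: "s \<ge> 1" "odd s" and mu1: "mu (Suc s) \<le> 1" and xs: "row_minimax n m A xs"
  shows "Phi xs (Suc (Suc s)) \<le> Phi xs s - mu (Suc s) * (fmax n m A (x s) - v)^2 / (2 * cc)"
proof -
  define t where "t = Suc s"
  have t1: "t \<ge> 1" and ev: "even t" and ts: "t - 1 = s" using s by (auto simp: t_def)
  define p where "p = x s"
  define q where "q = x t"
  have pS: "p \<in> S" and ppos: "\<forall>i<n. 0 < p i" using x_props[OF s(1)] by (auto simp: p_def)
  have qS: "q \<in> S" and qpos: "\<forall>i<n. 0 < q i" using x_props[OF t1] by (auto simp: q_def)
  have xsS: "xs \<in> S" using xs by (simp add: row_minimax_def)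
  define \<delta> where "\<delta> = fmax n m A p - v"
  have d0: "0 \<le> \<delta>" using v_le_fmax[OF pS] by (simp add: \<delta>_def)
  have d1: "\<delta> \<le> 1" using fmax_bounds(2)[OF m_pos pS A_range] v_nonneg by (simp add: \<delta>_def)
  define \<alpha> where "\<alpha> = alpha t"
  have cc2: "cc \<ge> 2" by simp
  have al: "\<alpha> = \<delta> / cc" using alpha_def t1 ev ts by (simp add: \<alpha>_def \<delta>_def p_def)
  have al0: "0 \<le> \<alpha>" using al d0 by simp
  have al_d: "\<alpha> \<le> \<delta> / 2"
  proof -
    have "\<delta> / cc \<le> \<delta> / 2" using d0 cc2 by (intro divide_left_mono) auto
    thus ?thesis using al by simp
  qed
  define \<mu> where "\<mu> = mu t"
  have mu0: "0 \<le> \<mu>" using mu_nonneg t1 by (simp add: \<mu>_def)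
  have mu1': "\<mu> \<le> 1" using mu1 by (simp add: \<mu>_def t_def)
  define P where "P = \<mu> * \<alpha>"
  have P0: "0 \<le> P" using mu0 al0 by (simp add: P_def)
  have Pd: "P \<le> \<delta> / 2"
  proof -
    have "\<mu> * \<alpha> \<le> 1 * \<alpha>" using mu1' al0 by (intro mult_right_mono) auto
    thus ?thesis using al_d by (simp add: P_def)
  qed
  have P1: "P \<le> 1/2" using Pd d1 by simp
  define et where "et = e t"
  have et: "et < m" and ech: "\<forall>j<m. colv n A p j \<le> colv n A p et"
    using e_choice t1 ev ts by (auto simp: et_def p_def payoff_unit_right)
  have F: "fmax n m A p = colv n A p et"
  proof -
    obtain j where "j < m" "fmax n m A p = colv n A p j" using fmax_attained[OF m_pos] by blast
    thus ?thesis using ech fmax_ge_colv[OF m_pos et, of n A p] by force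
  qed
  define b where "b k = A k et" for k
  have b01: "0 \<le> b k" "b k \<le> 1" if "k < n" for k using A_range et that by (auto simp: b_def)
  have yt: "y t = (\<lambda>j. (1 - \<alpha>) * ystar j + \<alpha> * unitv et j)"
    using even_rounds t1 ev by (simp add: \<alpha>_def et_def)
  have g: "rowv m A (y t) k = (1 - \<alpha>) * a k + \<alpha> * b k" for k
  proof -
    have "rowv m A (y t) k = (\<Sum>j<m. (1 - \<alpha>) * (A k j * ystar j) + \<alpha> * (A k j * unitv et j))"
      unfolding rowv_def yt by (intro sum.cong) (auto simp: algebra_simps)
    also have "\<dots> = (1 - \<alpha>) * a k + \<alpha> * (\<Sum>j<m. A k j * unitv et j)"
      by (simp add: sum.distrib sum_distrib_left rowv_def)
    also have "(\<Sum>j<m. A k j * unitv et j) = b k" unfolding unitv_def b_def using sum_unit'[OF et] .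
    finally show ?thesis .
  qed
  have ytS: "y t \<in> prob_simplex m"
  proof -
    have "\<forall>j<m. 0 \<le> y t j" using ystar_simplex al0 al_d d1
      by (auto simp: yt prob_simplex_def unitv_def intro!: add_nonneg_nonneg mult_nonneg_nonneg)
    moreover have "(\<Sum>j<m. y t j) = (1 - \<alpha>) * (\<Sum>j<m. ystar j) + \<alpha> * (\<Sum>j<m. unitv et j)"
      by (simp add: yt sum.distrib sum_distrib_left)
    moreover have "(\<Sum>j<m. unitv et j) = 1" using unitv_simplex[OF et] by (simp add: prob_simplex_def)
    ultimately show ?thesis using ystar_simplex by (simp add: prob_simplex_def)
  qed
  define Q where "Q = (\<Sum>k<n. q k * exp (- \<mu> * (rowv m A (y t) k - v)))"
  have Qpos: "0 < Q" unfolding Q_def using qpos n_pos by (intro sum_pos) (auto simp: lessThan_empty_iff)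
  have ZQ: "Z t = exp (- \<mu> * v) * Q"
    unfolding Z_def Q_def sum_distrib_left q_def \<mu>_def
    by (intro sum.cong) (auto simp: exp_add[symmetric] algebra_simps)
  have step1: "Phi xs (Suc t) \<le> Phi xs t + Q - 1"
  proof -
    have "Phi xs (Suc t) = Phi xs t + \<mu> * payoff n m A xs (y t) + ln (Z t)"
      using step_identity[OF t1 xsS] by (simp add: \<mu>_def)
    also have "ln (Z t) = - \<mu> * v + ln Q" using ZQ Qpos by (simp add: ln_mult)
    also have "\<mu> * payoff n m A xs (y t) \<le> \<mu> * v"
      using minimax_le[OF xs ytS] mu0 by (intro mult_left_mono) auto
    moreover have "ln Q \<le> Q - 1" using Qpos by (rule ln_le_minus_one)
    ultimately show ?thesis by (simp add: q_def)
  qed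
  have perk: "exp (- \<mu> * (rowv m A (y t) k - v)) \<le> 1 - P * (b k - v) + P^2" if k: "k < n" for k
  proof -
    have split: "- \<mu> * (rowv m A (y t) k - v) = (- (\<mu> * (1 - \<alpha>) * (a k - v))) + (- (P * (b k - v)))"
      by (simp add: g P_def algebra_simps)
    have E1: "exp (- (\<mu> * (1 - \<alpha>) * (a k - v))) \<le> 1"
      using a_ge[OF k] mu0 al_d d1 by (simp add: mult_nonneg_nonneg)
    have bv: "\<bar>b k - v\<bar> \<le> 1" using b01[OF k] v_nonneg v_le1 by auto
    have absP: "\<bar>P * (b k - v)\<bar> \<le> P" using bv P0 by (simp add: abs_mult mult_left_le)
    have E2: "exp (- (P * (b k - v))) \<le> 1 - P * (b k - v) + (P * (b k - v))^2"
      using exp_quad_bound[of "- (P * (b k - v))"] absP P1 by simp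
    have sq: "(P * (b k - v))^2 \<le> P^2"
    proof -
      have "(P * (b k - v))^2 = \<bar>P * (b k - v)\<bar>^2" by simp
      also have "\<dots> \<le> P^2" using absP by (intro power_mono) auto
      finally show ?thesis .
    qed
    have "exp (- \<mu> * (rowv m A (y t) k - v)) = exp (- (\<mu> * (1 - \<alpha>) * (a k - v))) * exp (- (P * (b k - v)))"
      unfolding split by (rule exp_add)
    also have "\<dots> \<le> 1 * exp (- (P * (b k - v)))" using E1 by (intro mult_right_mono) auto
    also have "\<dots> = exp (- (P * (b k - v)))" by simp
    finally show ?thesis using E2 sq by linarith
  qed
  have Qle: "Q \<le> 1 - P * ((\<Sum>k<n. q k * b k) - v) + P^2"
  proof -
    have "Q \<le> (\<Sum>k<n. q k * (1 - P * (b k - v) + P^2))"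
      unfolding Q_def using perk qpos by (intro sum_mono mult_left_mono) auto
    also have "\<dots> = (\<Sum>k<n. q k) * (1 + P * v + P^2) - P * (\<Sum>k<n. q k * b k)"
      by (simp add: algebra_simps sum.distrib sum_subtractf sum_distrib_left sum_distrib_right)
    also have "\<dots> = 1 - P * ((\<Sum>k<n. q k * b k) - v) + P^2"
      using qS by (simp add: prob_simplex_def algebra_simps)
    finally show ?thesis .
  qed
  define Ws where "Ws = W s"
  have Ws: "0 < Ws" "Ws \<le> 1" using W_props[OF s(1)] by (auto simp: Ws_def)
  define E' where "E' k = exp (- mu s * (a k - v))" for k
  have E'01: "0 < E' k" "E' k \<le> 1" if "k < n" for k
    using a_ge[OF that] mu_nonneg s(1) by (auto simp: E'_def mult_nonneg_nonneg)
  have qk: "q k = p k * E' k / Ws" if "k < n" for k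
    using odd_step(2)[OF s xs that] by (simp add: q_def t_def p_def E'_def Ws_def)
  have qb: "(\<Sum>k<n. q k * b k) \<ge> \<delta> + v - (1 - Ws)"
  proof -
    have num0: "0 \<le> (\<Sum>k<n. p k * E' k * b k)"
      using ppos E'01 b01 by (intro sum_nonneg mult_nonneg_nonneg) (auto simp: less_imp_le)
    have "(\<Sum>k<n. q k * b k) = (\<Sum>k<n. p k * E' k * b k) / Ws"
      by (simp add: qk sum_divide_distrib)
    also have "\<dots> \<ge> (\<Sum>k<n. p k * E' k * b k)" using num0 Ws by (simp add: le_divide_eq mult_left_le)
    finally have i1: "(\<Sum>k<n. q k * b k) \<ge> (\<Sum>k<n. p k * E' k * b k)" .
    have i2: "(\<Sum>k<n. p k * E' k * b k) \<ge> (\<Sum>k<n. p k * b k - p k + p k * E' k)"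
    proof (rule sum_mono)
      fix k assume "k \<in> {..<n}"
      hence k: "k < n" by simp
      have "0 \<le> p k * ((1 - E' k) * (1 - b k))"
        using ppos k E'01[OF k] b01[OF k] by (intro mult_nonneg_nonneg) auto
      thus "p k * b k - p k + p k * E' k \<le> p k * E' k * b k" by (simp add: algebra_simps)
    qed
    have i3: "(\<Sum>k<n. p k * b k - p k + p k * E' k) = fmax n m A p - 1 + Ws"
    proof -
      have "(\<Sum>k<n. p k * b k - p k + p k * E' k) = (\<Sum>k<n. p k * b k) - (\<Sum>k<n. p k) + (\<Sum>k<n. p k * E' k)"
        by (simp add: sum.distrib sum_subtractf)
      moreover have "(\<Sum>k<n. p k * b k) = fmax n m A p" using F by (simp add: colv_def b_def)
      moreover have "(\<Sum>k<n. p k * E' k) = Ws" by (simp add: Ws_def W_def p_def E'_def)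
      moreover have "(\<Sum>k<n. p k) = 1" using pS by (simp add: prob_simplex_def)
      ultimately show ?thesis by simp
    qed
    show ?thesis using i1 i2 i3 by (simp add: \<delta>_def)
  qed
  have step0: "Phi xs t \<le> Phi xs s + Ws - 1"
  proof -
    have "Phi xs t = Phi xs s + ln Ws" using odd_step(1)[OF s xs] by (simp add: t_def Ws_def)
    moreover have "ln Ws \<le> Ws - 1" using Ws by (intro ln_le_minus_one) auto
    ultimately show ?thesis by simp
  qed
  have h1: "P * ((\<Sum>k<n. q k * b k) - v) \<ge> P * (\<delta> - (1 - Ws))"
    using qb P0 by (intro mult_left_mono) auto
  have h2: "0 \<le> (1 - Ws) * (1 - P)" using Ws P1 by (intro mult_nonneg_nonneg) auto
  have h3: "P^2 \<le> P * \<delta> / 2"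
  proof -
    have "P * P \<le> P * (\<delta> / 2)" using Pd P0 by (intro mult_left_mono) auto
    thus ?thesis by (simp add: power2_eq_square)
  qed
  have main: "Phi xs (Suc t) \<le> Phi xs s - P * \<delta> / 2"
  proof -
    have e1: "P * (\<delta> - (1 - Ws)) = P * \<delta> - P * (1 - Ws)" by (simp add: algebra_simps)
    have e2: "(1 - Ws) * (1 - P) = (1 - Ws) - P * (1 - Ws)" by (simp add: algebra_simps)
    show ?thesis using step1 step0 Qle h1 h2 h3 e1 e2 by linarith
  qed
  have "P * \<delta> / 2 = mu (Suc s) * (fmax n m A (x s) - v)^2 / (2 * cc)"
    by (simp add: P_def al \<mu>_def t_def \<delta>_def p_def power2_eq_square)
  thus ?thesis using main by (simp add: t_def)
qed

end

context thm5 begin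

lemma mu_eventually_le1: "\<exists>T0\<ge>1. \<forall>t\<ge>T0. mu t \<le> 1"
proof -
  obtain t' where t': "t' \<ge> 1" "mu t' \<le> 1" using mu_small by blast
  have "mu t \<le> mu t'" if "t \<ge> t'" for t
    using that
  proof (induction t rule: dec_induct)
    case base thus ?case by simp
  next
    case (step t)
    have "mu (Suc t) \<le> mu t" using mu_noninc step.hyps t'(1) by simp
    thus ?case using step.IH by linarith
  qed
  thus ?thesis using t' by (intro exI[of _ t']) force
qed

lemma mono_after:
  assumes s: "odd s" "s \<ge> T0" "T0 \<ge> 1" and T0: "\<forall>t\<ge>T0. mu t \<le> 1" and xs: "row_minimax n m A xs"
  shows "Phi xs (s + 2 * k) \<le> Phi xs s \<and> Phi xs (s + 2 * k + 1) \<le> Phi xs s"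
proof (induction k)
  case 0
  show ?case using odd_decr[of s xs] s xs by simp
next
  case (Suc k)
  define s' where "s' = s + 2 * k"
  have s': "s' \<ge> 1" "odd s'" "mu (Suc s') \<le> 1" using s T0 by (auto simp: s'_def)
  have nn: "0 \<le> mu (Suc s') * (fmax n m A (x s') - v)^2 / (2 * cc)"
    using mu_nonneg by simp
  have a1: "Phi xs (Suc (Suc s')) \<le> Phi xs s'" using pair_step[OF s'(1,2,3) xs] nn by linarith
  have a2: "Phi xs (Suc (Suc (Suc s'))) \<le> Phi xs (Suc (Suc s'))"
    using odd_decr[of "Suc (Suc s')" xs] s' xs by simp
  have e1: "s + 2 * Suc k = Suc (Suc s')" and e2: "s + 2 * Suc k + 1 = Suc (Suc (Suc s'))"
    by (simp_all add: s'_def)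
  show ?case unfolding e1 e2 using a1 a2 Suc.IH by (simp add: s'_def)
qed

lemma mono_after':
  assumes s: "odd s" "s \<ge> T0" "T0 \<ge> 1" and T0: "\<forall>t\<ge>T0. mu t \<le> 1" and xs: "row_minimax n m A xs"
    and t: "t \<ge> s"
  shows "Phi xs t \<le> Phi xs s"
proof -
  define k where "k = (t - s) div 2"
  have "t = s + 2 * k \<or> t = s + 2 * k + 1" using t unfolding k_def by presburger
  thus ?thesis using mono_after[OF s T0 xs, of k] by auto
qed

lemma minimax_limit:
  assumes zS: "\<forall>k. z k \<in> S" and zf: "(\<lambda>k. fmax n m A (z k)) \<longlonglongrightarrow> v"
  shows "\<exists>r xb. strict_mono r \<and> row_minimax n m A xb \<and> (\<forall>i<n. (\<lambda>k. z (r k) i) \<longlonglongrightarrow> xb i)"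
proof -
  have bnd: "\<forall>k. \<forall>i<n. 0 \<le> z k i \<and> z k i \<le> 1"
  proof (intro allI impI)
    fix k i assume i: "i < n"
    have "z k i \<le> (\<Sum>i<n. z k i)" using zS i by (intro member_le_sum) (auto simp: prob_simplex_def)
    thus "0 \<le> z k i \<and> z k i \<le> 1" using zS i by (auto simp: prob_simplex_def)
  qed
  obtain r L where r: "strict_mono r" and L: "\<forall>i<n. (\<lambda>k. z (r k) i) \<longlonglongrightarrow> L i"
    using diag_subseq[OF bnd] by blast
  have Lnn: "0 \<le> L i" if i: "i < n" for i
    using L i bnd by (intro LIMSEQ_le_const[of "\<lambda>k. z (r k) i"]) auto
  have "(\<lambda>k. \<Sum>i<n. z (r k) i) \<longlonglongrightarrow> (\<Sum>i<n. L i)" using L by (intro tendsto_sum) auto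
  moreover have "(\<lambda>k. \<Sum>i<n. z (r k) i) = (\<lambda>k. 1)" using zS by (simp add: prob_simplex_def)
  ultimately have "(\<lambda>k. 1::real) \<longlonglongrightarrow> (\<Sum>i<n. L i)" by simp
  hence "(\<Sum>i<n. L i) = 1" using LIMSEQ_unique tendsto_const by blast
  hence LS: "L \<in> S" using Lnn by (simp add: prob_simplex_def)
  obtain j where j: "j < m" "fmax n m A L = colv n A L j" using fmax_attained[OF m_pos] by blast
  have c1: "(\<lambda>k. colv n A (z (r k)) j) \<longlonglongrightarrow> colv n A L j"
    unfolding colv_def using L by (intro tendsto_sum tendsto_mult_right) auto
  have c2: "(\<lambda>k. fmax n m A (z (r k))) \<longlonglongrightarrow> v"
    using LIMSEQ_subseq_LIMSEQ[OF zf r] by (simp add: o_def)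
  have "colv n A L j \<le> v"
    using c1 c2 fmax_ge_colv[OF m_pos j(1)] by (intro tendsto_le[OF _ c2 c1]) auto
  hence "fmax n m A L = v" using v_le_fmax[OF LS] j by simp
  thus ?thesis using r L LS by (auto simp: row_minimax_def)
qed

lemma fmax_sandwich:
  assumes zf: "\<forall>k. zf k \<in> S \<and> fmax n m A (zf k) < v + inverse (real (Suc k))"
  shows "(\<lambda>k. fmax n m A (zf k)) \<longlonglongrightarrow> v"
proof -
  have h: "(\<lambda>k. v + inverse (real (Suc k))) \<longlonglongrightarrow> v + 0"
    by (intro tendsto_add tendsto_const LIMSEQ_inverse_real_of_nat)
  show "(\<lambda>k. fmax n m A (zf k)) \<longlonglongrightarrow> v"
  proof (rule tendsto_sandwich[OF _ _ tendsto_const[of v]])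
    show "\<forall>\<^sub>F k in sequentially. v \<le> fmax n m A (zf k)" using zf v_le_fmax by simp
    show "\<forall>\<^sub>F k in sequentially. fmax n m A (zf k) \<le> v + inverse (real (Suc k))"
      using zf by (simp add: less_imp_le)
    show "(\<lambda>k. v + inverse (real (Suc k))) \<longlonglongrightarrow> v" using h by simp
  qed
qed

lemma near_inf_seq:
  assumes ex: "\<forall>k. \<exists>z. P z \<and> z \<in> S \<and> fmax n m A z < v + inverse (real (Suc k))"
  shows "\<exists>zf. \<forall>k. P (zf k) \<and> zf k \<in> S \<and> fmax n m A (zf k) < v + inverse (real (Suc k))
           \<and> True" and "\<And>zf. \<forall>k. zf k \<in> S \<and> fmax n m A (zf k) < v + inverse (real (Suc k)) \<Longrightarrow>
           (\<lambda>k. fmax n m A (zf k)) \<longlonglongrightarrow> v"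
proof -
  show "\<exists>zf. \<forall>k. P (zf k) \<and> zf k \<in> S \<and> fmax n m A (zf k) < v + inverse (real (Suc k)) \<and> True"
    using choice[OF ex] by simp
next
  fix zf assume zf: "\<forall>k. zf k \<in> S \<and> fmax n m A (zf k) < v + inverse (real (Suc k))"
  have h: "(\<lambda>k. v + inverse (real (Suc k))) \<longlonglongrightarrow> v + 0"
    by (intro tendsto_add tendsto_const LIMSEQ_inverse_real_of_nat)
  show "(\<lambda>k. fmax n m A (zf k)) \<longlonglongrightarrow> v"
  proof (rule tendsto_sandwich[OF _ _ tendsto_const[of v]])
    show "\<forall>\<^sub>F k in sequentially. v \<le> fmax n m A (zf k)" using zf v_le_fmax by simp
    show "\<forall>\<^sub>F k in sequentially. fmax n m A (zf k) \<le> v + inverse (real (Suc k))"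
      using zf by (simp add: less_imp_le)
    show "(\<lambda>k. v + inverse (real (Suc k))) \<longlonglongrightarrow> v" using h by simp
  qed
qed

lemma exists_minimax: "\<exists>xs. row_minimax n m A xs"
proof -
  have ex: "\<forall>k. \<exists>z. True \<and> z \<in> S \<and> fmax n m A z < v + inverse (real (Suc k))"
  proof
    fix k
    show "\<exists>z. True \<and> z \<in> S \<and> fmax n m A z < v + inverse (real (Suc k))"
    proof (rule ccontr)
      assume "\<not> ?thesis"
      hence "\<forall>z\<in>S. v + inverse (real (Suc k)) \<le> fmax n m A z" by force
      hence "v + inverse (real (Suc k)) \<le> v" unfolding game_value_def
        using S_ne by (intro cINF_greatest) (auto simp: game_value_def)
      thus False by simp
    qed
  qed
  obtain zf where zf: "\<forall>k. zf k \<in> S \<and> fmax n m A (zf k) < v + inverse (real (Suc k))"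
    using near_inf_seq(1)[OF ex] by blast
  show ?thesis using minimax_limit[of zf] zf near_inf_seq(2)[OF ex zf] by blast
qed

end

context thm5 begin

lemma near_opt:
  assumes xs: "row_minimax n m A xs" and eps: "\<epsilon> > 0"
  shows "\<exists>s\<ge>N. odd s \<and> fmax n m A (x s) < v + \<epsilon>"
proof (rule ccontr)
  assume "\<not> ?thesis"
  hence far: "\<forall>s\<ge>N. odd s \<longrightarrow> v + \<epsilon> \<le> fmax n m A (x s)" by force
  obtain T0 where T0: "T0 \<ge> 1" "\<forall>t\<ge>T0. mu t \<le> 1" using mu_eventually_le1 by blast
  define s0 where "s0 = 2 * (N + T0) + 1"
  have s0: "odd s0" "s0 \<ge> N" "s0 \<ge> T0" "s0 \<ge> 1" by (auto simp: s0_def)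
  define K where "K = \<epsilon>^2 / (2 * cc)"
  have K0: "K > 0" using eps by (simp add: K_def)
  define Sm where "Sm T = (\<Sum>t=1..T. mu t)" for T
  have inv: "Phi xs (s0 + 2 * k) + K / 2 * Sm (s0 + 2 * k) \<le> Phi xs s0 + K / 2 * Sm s0" for k
  proof (induction k)
    case 0 thus ?case by simp
  next
    case (Suc k)
    define s' where "s' = s0 + 2 * k"
    have s': "s' \<ge> 1" "odd s'" "mu (Suc s') \<le> 1" "s' \<ge> N" using s0 T0 by (auto simp: s'_def)
    have dlt: "\<epsilon> \<le> fmax n m A (x s') - v" using far s' by auto
    have "\<epsilon>^2 \<le> (fmax n m A (x s') - v)^2" using dlt eps by (intro power_mono) auto
    hence "mu (Suc s') * \<epsilon>^2 \<le> mu (Suc s') * (fmax n m A (x s') - v)^2"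
      using mu_nonneg by (intro mult_left_mono) auto
    hence "mu (Suc s') * K \<le> mu (Suc s') * (fmax n m A (x s') - v)^2 / (2 * cc)"
      by (simp add: K_def divide_right_mono)
    hence p: "Phi xs (Suc (Suc s')) \<le> Phi xs s' - mu (Suc s') * K"
      using pair_step[OF s'(1,2,3) xs] by linarith
    have sm: "Sm (Suc (Suc s')) = Sm s' + mu (Suc s') + mu (Suc (Suc s'))"
      by (simp add: Sm_def)
    have mm: "mu (Suc (Suc s')) \<le> mu (Suc s')" using mu_noninc by simp
    have "K / 2 * Sm (Suc (Suc s')) \<le> K / 2 * (Sm s' + 2 * mu (Suc s'))"
      using sm mm K0 by (intro mult_left_mono) auto
    also have "\<dots> = K / 2 * Sm s' + mu (Suc s') * K" by (simp add: algebra_simps)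
    finally have "Phi xs (Suc (Suc s')) + K / 2 * Sm (Suc (Suc s')) \<le> Phi xs s' + K / 2 * Sm s'"
      using p by linarith
    moreover have "s0 + 2 * Suc k = Suc (Suc s')" by (simp add: s'_def)
    ultimately show ?case using Suc.IH by (simp add: s'_def)
  qed
  define B where "B = (Phi xs s0 + K / 2 * Sm s0) / (K / 2) + 1"
  have "\<forall>\<^sub>F T in sequentially. B \<le> Sm T" using mu_div unfolding filterlim_at_top Sm_def by blast
  then obtain N' where N': "\<forall>T\<ge>N'. B \<le> Sm T" unfolding eventually_sequentially by blast
  have "B \<le> Sm (s0 + 2 * N')" using N' by simp
  hence "K / 2 * B \<le> K / 2 * Sm (s0 + 2 * N')" using K0 by (intro mult_left_mono) auto
  moreover have "K / 2 * B = Phi xs s0 + K / 2 * Sm s0 + K / 2" using K0 by (simp add: B_def field_simps)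
  moreover have "0 \<le> Phi xs (s0 + 2 * N')"
    using Phi_nonneg xs s0 by (simp add: row_minimax_def)
  ultimately show False using inv[of N'] K0 by linarith
qed

lemma main:
  "\<exists>xbar. row_minimax n m A xbar \<and>
     (\<lambda>t. rel_entropy n xbar (x t)) \<longlonglongrightarrow> 0 \<and>
     (\<forall>i<n. (\<lambda>t. x t i) \<longlonglongrightarrow> xbar i)"
proof -
  obtain xs where xs: "row_minimax n m A xs" using exists_minimax by blast
  obtain T0 where T0: "T0 \<ge> 1" "\<forall>t\<ge>T0. mu t \<le> 1" using mu_eventually_le1 by blast
  have ex: "\<forall>k. \<exists>s. (odd s \<and> s \<ge> k) \<and> x s \<in> S \<and> fmax n m A (x s) < v + inverse (real (Suc k))"
  proof
    fix k
    obtain s where "s \<ge> k" "odd s" "fmax n m A (x s) < v + inverse (real (Suc k))"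
      using near_opt[OF xs, of "inverse (real (Suc k))" k] by auto
    moreover have "x s \<in> S" using x_props[of s] \<open>odd s\<close> by (cases s) auto
    ultimately show "\<exists>s. (odd s \<and> s \<ge> k) \<and> x s \<in> S \<and> fmax n m A (x s) < v + inverse (real (Suc k))"
      by blast
  qed
  obtain sf where sf: "\<forall>k. (odd (sf k) \<and> sf k \<ge> k) \<and> x (sf k) \<in> S \<and> fmax n m A (x (sf k)) < v + inverse (real (Suc k))"
    using choice[OF ex] by blast
  have zS: "\<forall>k. (\<lambda>k. x (sf k)) k \<in> S" using sf by simp
  have zf: "(\<lambda>k. fmax n m A (x (sf k))) \<longlonglongrightarrow> v"
    using fmax_sandwich[of "\<lambda>k. x (sf k)"] sf by simp
  obtain r xb where r: "strict_mono r" and xb: "row_minimax n m A xb"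
    and conv: "\<forall>i<n. (\<lambda>k. x (sf (r k)) i) \<longlonglongrightarrow> xb i"
    using minimax_limit[of "\<lambda>k. x (sf k)", OF zS zf] by blast
  have xbS: "xb \<in> S" using xb by (simp add: row_minimax_def)
  have sub0: "(\<lambda>k. Phi xb (sf (r k))) \<longlonglongrightarrow> 0" using re_continuous[OF xbS conv] .
  have Phi0: "(\<lambda>t. Phi xb t) \<longlonglongrightarrow> 0"
  proof (rule LIMSEQ_I)
    fix \<epsilon> :: real assume eps: "\<epsilon> > 0"
    obtain k0 where k0: "\<forall>k\<ge>k0. norm (Phi xb (sf (r k)) - 0) < \<epsilon>"
      using LIMSEQ_D[OF sub0 eps] by blast
    define k where "k = k0 + T0"
    define N where "N = sf (r k)"
    have a1: "r k \<ge> k" using seq_suble[OF r] by simp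
    have a2: "sf (r k) \<ge> r k" using sf by blast
    have N: "N \<ge> T0" "odd N" unfolding N_def using a1 a2 sf k_def by (linarith, blast)
    have PN: "Phi xb N < \<epsilon>"
    proof -
      have "\<bar>Phi xb (sf (r k))\<bar> < \<epsilon>" using k0 by (simp add: k_def)
      thus ?thesis by (simp add: N_def)
    qed
    show "\<exists>no. \<forall>t\<ge>no. norm (Phi xb t - 0) < \<epsilon>"
    proof (intro exI allI impI)
      fix t assume t: "t \<ge> N"
      have "Phi xb t \<le> Phi xb N" using mono_after'[OF N(2) N(1) T0 xb t] .
      moreover have "0 \<le> Phi xb t" using Phi_nonneg[OF xbS] t N T0 by simp
      ultimately show "norm (Phi xb t - 0) < \<epsilon>" using PN by simp
    qed
  qed
  have comp: "(\<lambda>t. x t i) \<longlonglongrightarrow> xb i" if i: "i < n" for i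
  proof -
    have sq: "(\<lambda>t. 2 * sqrt (Phi xb t)) \<longlonglongrightarrow> 2 * sqrt 0"
      by (intro tendsto_mult tendsto_const tendsto_real_sqrt Phi0)
    have "(\<lambda>t. x t i - xb i) \<longlonglongrightarrow> 0"
    proof -
      have sq0: "(\<lambda>t. 2 * sqrt (Phi xb t)) \<longlonglongrightarrow> 0" using sq by simp
    show "(\<lambda>t. x t i - xb i) \<longlonglongrightarrow> 0"
    proof (rule Lim_null_comparison[OF _ sq0])
      show "\<forall>\<^sub>F t in sequentially. norm (x t i - xb i) \<le> 2 * sqrt (Phi xb t)"
        unfolding eventually_sequentially
      proof (intro exI[of _ 1] allI impI)
        fix t :: nat assume t: "t \<ge> 1"
        have xt: "x t \<in> S" "\<forall>i<n. 0 < x t i" using x_props[OF t] by auto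
        have h: "(sqrt (xb i) - sqrt (x t i))^2 \<le> Phi xb t" using re_component[OF xbS xt i] .
        have "\<bar>sqrt (xb i) - sqrt (x t i)\<bar> = sqrt ((sqrt (xb i) - sqrt (x t i))^2)" by simp
        also have "\<dots> \<le> sqrt (Phi xb t)" using h by (rule real_sqrt_le_mono)
        finally have d: "\<bar>sqrt (xb i) - sqrt (x t i)\<bar> \<le> sqrt (Phi xb t)" .
        have xb01: "0 \<le> xb i" "xb i \<le> 1" using xbS i member_le_sum[of i "{..<n}" xb]
          by (auto simp: prob_simplex_def)
        have xt01: "0 \<le> x t i" "x t i \<le> 1" using xt i member_le_sum[of i "{..<n}" "x t"]
          by (auto simp: prob_simplex_def)
        have "x t i - xb i = (sqrt (x t i) - sqrt (xb i)) * (sqrt (x t i) + sqrt (xb i))"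
          using xb01 xt01 by (simp add: algebra_simps)
        hence "\<bar>x t i - xb i\<bar> = \<bar>sqrt (xb i) - sqrt (x t i)\<bar> * (sqrt (x t i) + sqrt (xb i))"
        proof -
          assume eq: "x t i - xb i = (sqrt (x t i) - sqrt (xb i)) * (sqrt (x t i) + sqrt (xb i))"
          have nn: "0 \<le> sqrt (x t i) + sqrt (xb i)" using xb01 xt01 by simp
          show ?thesis unfolding eq abs_mult using nn by (simp add: abs_minus_commute)
        qed
        also have "\<dots> \<le> sqrt (Phi xb t) * 2"
        proof -
          have s1: "sqrt (x t i) \<le> 1" "sqrt (xb i) \<le> 1" using xb01 xt01 by auto
          have s2: "sqrt (x t i) + sqrt (xb i) \<le> 2" using s1 by linarith
          have "0 \<le> Phi xb t" using Phi_nonneg[OF xbS t] .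
          thus ?thesis using mult_mono[OF d s2] xb01 xt01 by simp
        qed
        finally show "norm (x t i - xb i) \<le> 2 * sqrt (Phi xb t)" by simp
      qed
    qed
    qed
    hence "(\<lambda>t. (x t i - xb i) + xb i) \<longlonglongrightarrow> 0 + xb i" by (intro tendsto_add tendsto_const)
    thus ?thesis by simp
  qed
  show ?thesis using xb Phi0 comp by blast
qed

end

theorem theorem5:
  fixes n m :: nat
    and A :: "nat \<Rightarrow> nat \<Rightarrow> real"
    and mu :: "nat \<Rightarrow> real"
    and x y :: "nat \<Rightarrow> nat \<Rightarrow> real"
    and ystar :: "nat \<Rightarrow> real"
    and e :: "nat \<Rightarrow> nat"
    and alpha :: "nat \<Rightarrow> real"
  assumes n_pos: "n \<ge> 1" and m_pos: "m \<ge> 1"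
    and A_range: "\<forall>i<n. \<forall>j<m. 0 \<le> A i j \<and> A i j \<le> 1"
    and A_nonzero: "\<exists>i<n. \<exists>j<m. A i j \<noteq> 0"
    and mu_nonneg: "\<forall>t\<ge>1. 0 \<le> mu t"
    and mu_noninc: "\<forall>t\<ge>1. mu (Suc t) \<le> mu t"
    and mu_div: "filterlim (\<lambda>T. \<Sum>t=1..T. mu t) at_top sequentially"
    and mu_small: "\<exists>t'\<ge>1. mu t' \<le> 1"
    and x1: "x 1 \<in> prob_simplex n" and x1_pos: "\<forall>i<n. 0 < x 1 i"
    and mwu: "\<forall>t\<ge>1. \<forall>i<n. x (Suc t) i =
        x t i * exp (- mu t * (\<Sum>j<m. A i j * y t j)) /
        (\<Sum>k<n. x t k * exp (- mu t * (\<Sum>j<m. A k j * y t j)))"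
    and ystar: "col_minimax n m A ystar"
    and odd_rounds: "\<forall>t\<ge>1. odd t \<longrightarrow> y t = ystar"
    and e_choice: "\<forall>t\<ge>1. even t \<longrightarrow> e t < m \<and>
        (\<forall>j<m. payoff n m A (x (t - 1)) (unitv j) \<le> payoff n m A (x (t - 1)) (unitv (e t)))"
    and alpha_def: "\<forall>t\<ge>1. even t \<longrightarrow>
        alpha t = (fmax n m A (x (t - 1)) - game_value n m A) / max (real n / 4) 2"
    and even_rounds: "\<forall>t\<ge>1. even t \<longrightarrow>
        y t = (\<lambda>j. (1 - alpha t) * ystar j + alpha t * unitv (e t) j)"
  shows "\<exists>xbar. row_minimax n m A xbar \<and>
           (\<lambda>t. rel_entropy n xbar (x t)) \<longlonglongrightarrow> 0 \<and>
           (\<forall>i<n. (\<lambda>t. x t i) \<longlonglongrightarrow> xbar i)"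
  proof -
  have L: "thm5 n m A mu x y ystar e alpha"
    by (unfold_locales; (fact n_pos m_pos A_range mu_nonneg mu_noninc mu_div mu_small x1 x1_pos mwu ystar
      odd_rounds e_choice alpha_def even_rounds)?)
  show ?thesis using thm5.main[OF L] .
qed

end
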